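(* For distinct $l, l' \in H^*$ and every $n \ge 1$, the degree-$n$ parts of $\Phi_l(R(G/H,1))$ and $\Phi_{l'}(R(G/H,1))$ are orthogonal with respect to $\langle \cdot, \cdot \rangle$; i.e., the sub-bialgebras $\Phi_l(R(G/H,1))$, $l \in H^*$, are pairwise orthogonal in positive degrees.
   Context: Let $G$ be a finite abelian group (written additively) and $H \subseteq G$ a subgroup. For $n \ge 1$, $S_n[G] = S_n \ltimes G^n$ is the group of $n \times n$ monomial matrices whose nonzero entries lie in $G$. Let $s: S_n[G] \to G$ be the homomorphism sending a monomial matrix to the sum of its nonzero entries, and let $G_n(G,H) = \{g \in S_n[G] : s(g) \in H\}$. For $n \ge 1$, $R_n(G,H)$ is the Grothendieck group of finite-dimensional complex representations of $G_n(G,H)$, $R_0(G,H) = \mathbb{Z}$, and $R(G,H) = \bigoplus_{n \ge 0} R_n(G,H)$, with graded bilinear form $\langle \cdot,\cdot\rangle$ for which the irreducible classes (and $1 \in R_0$) form an orthonormal basis; similarly $R(G/H,1)$ is built from the groups $G_n(G/H,1)$ of monomial matrices with entries in $G/H$ summing to $0$. Let $\phi: G_n(G,H) \to G_n(G/H,1)$ be reduction of entries mod $H$ (surjective, kernel the diagonal subgroup $H^n$), and $\phi^*: R(G/H,1) \to R(G,H)$ the graded map induced by pullback. $H^* = \mathrm{Hom}(H, \mathbb{C}^\times)$; for $l \in H^*$, $\tau_l$ is the graded operator on $R(G,H)$ induced by tensoring with the linear character $g \mapsto l(s(g))$ of $G_n(G,H)$, and $\Phi_l = \tau_l \circ \phi^*$.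 *)

theory Defs
  imports "HOL-Algebra.Algebra" "Jordan_Normal_Form.Matrix"
begin

text \<open>Monomial matrices over a group G: the pair (p, v) stands for the n x n
matrix whose only nonzero entries are v i at position (i, p i), i < n,
where p is a permutation of the index set {..<n}.  Matrix multiplication
gives (p,v)(q,w) = (q o p, i maps to v i * w (p i)).\<close>

definition mon_carrier :: "('a,'b) monoid_scheme \<Rightarrow> nat \<Rightarrow> ((nat \<Rightarrow> nat) \<times> (nat \<Rightarrow> 'a)) set" where
  "mon_carrier G n = {(p, v). p permutes {..<n} \<and> (\<forall>i<n. v i \<in> carrier G) \<and> (\<forall>i. n \<le> i \<longrightarrow> v i = undefined)}"

definition mon_mult :: "('a,'b) monoid_scheme \<Rightarrow> nat \<Rightarrow> (nat \<Rightarrow> nat) \<times> (nat \<Rightarrow> 'a) \<Rightarrow> (nat \<Rightarrow> nat) \<times> (nat \<Rightarrow> 'a) \<Rightarrow> (nat \<Rightarrow> nat) \<times> (nat \<Rightarrow> 'a)" where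
  "mon_mult G n x y = (fst y \<circ> fst x, \<lambda>i. if i < n then snd x i \<otimes>\<^bsub>G\<^esub> snd y (fst x i) else undefined)"

definition mon_one :: "('a,'b) monoid_scheme \<Rightarrow> nat \<Rightarrow> (nat \<Rightarrow> nat) \<times> (nat \<Rightarrow> 'a)" where
  "mon_one G n = (id, \<lambda>i. if i < n then \<one>\<^bsub>G\<^esub> else undefined)"

text \<open>The map s: sum (here: product, as HOL-Algebra groups are written
multiplicatively) of the nonzero entries.\<close>
definition entry_sum :: "('a,'b) monoid_scheme \<Rightarrow> nat \<Rightarrow> (nat \<Rightarrow> nat) \<times> (nat \<Rightarrow> 'a) \<Rightarrow> 'a" where
  "entry_sum G n x = finprod G (snd x) {..<n}"

definition Gn :: "('a,'b) monoid_scheme \<Rightarrow> 'a set \<Rightarrow> nat \<Rightarrow> ((nat \<Rightarrow> nat) \<times> (nat \<Rightarrow> 'a)) monoid" where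
  "Gn G H n = \<lparr> carrier = {x \<in> mon_carrier G n. entry_sum G n x \<in> H},
                monoid.mult = mon_mult G n, one = mon_one G n \<rparr>"

definition red :: "('a,'b) monoid_scheme \<Rightarrow> 'a set \<Rightarrow> nat \<Rightarrow> (nat \<Rightarrow> nat) \<times> (nat \<Rightarrow> 'a) \<Rightarrow> (nat \<Rightarrow> nat) \<times> (nat \<Rightarrow> 'a set)" where
  "red G H n x = (fst x, \<lambda>i. if i < n then H #>\<^bsub>G\<^esub> snd x i else undefined)"

definition mtrace :: "complex mat \<Rightarrow> complex" where
  "mtrace A = (\<Sum>i<dim_row A. A $$ (i, i))"

definition is_rep :: "('g,'b) monoid_scheme \<Rightarrow> nat \<Rightarrow> ('g \<Rightarrow> complex mat) \<Rightarrow> bool" where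
  "is_rep \<Gamma> d \<rho> \<longleftrightarrow>
     (\<forall>g\<in>carrier \<Gamma>. \<rho> g \<in> carrier_mat d d) \<and>
     (\<forall>g\<in>carrier \<Gamma>. \<forall>h\<in>carrier \<Gamma>. \<rho> (g \<otimes>\<^bsub>\<Gamma>\<^esub> h) = \<rho> g * \<rho> h) \<and>
     \<rho> \<one>\<^bsub>\<Gamma>\<^esub> = 1\<^sub>m d"

text \<open>Elements of the Grothendieck group R(Gamma) are differences [V] - [W];
we identify them with their (virtual) characters.\<close>
definition virtual_char :: "('g,'b) monoid_scheme \<Rightarrow> ('g \<Rightarrow> complex) \<Rightarrow> bool" where
  "virtual_char \<Gamma> \<chi> \<longleftrightarrow> (\<exists>d1 \<rho>1 d2 \<rho>2. is_rep \<Gamma> d1 \<rho>1 \<and> is_rep \<Gamma> d2 \<rho>2 \<and>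
      (\<forall>g\<in>carrier \<Gamma>. \<chi> g = mtrace (\<rho>1 g) - mtrace (\<rho>2 g)))"

text \<open>The bilinear form making irreducible classes orthonormal, in terms of characters.\<close>
definition char_inner :: "('g,'b) monoid_scheme \<Rightarrow> ('g \<Rightarrow> complex) \<Rightarrow> ('g \<Rightarrow> complex) \<Rightarrow> complex" where
  "char_inner \<Gamma> \<chi> \<psi> = (\<Sum>g\<in>carrier \<Gamma>. \<chi> g * cnj (\<psi> g)) / of_nat (card (carrier \<Gamma>))"

definition lin_char :: "('a,'b) monoid_scheme \<Rightarrow> 'a set \<Rightarrow> ('a \<Rightarrow> complex) \<Rightarrow> bool" where
  "lin_char G H l \<longleftrightarrow> (\<forall>x\<in>H. l x \<noteq> 0) \<and> (\<forall>x\<in>H. \<forall>y\<in>H. l (x \<otimes>\<^bsub>G\<^esub> y) = l x * l y)"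

text \<open>Phi_l = tau_l o phi^*, on characters: pull back along reduction mod H and
tensor with the linear character g maps to l (s g).\<close>
definition Phi :: "('a,'b) monoid_scheme \<Rightarrow> 'a set \<Rightarrow> nat \<Rightarrow> ('a \<Rightarrow> complex) \<Rightarrow>
     ((nat \<Rightarrow> nat) \<times> (nat \<Rightarrow> 'a set) \<Rightarrow> complex) \<Rightarrow> (nat \<Rightarrow> nat) \<times> (nat \<Rightarrow> 'a) \<Rightarrow> complex" where
  "Phi G H n l \<chi> = (\<lambda>g. l (entry_sum G n g) * \<chi> (red G H n g))"

end

theory Submission
  imports Defs
begin

lemma lin_char_one:
  assumes "group G" "subgroup H G" "lin_char G H l"
  shows "l \<one>\<^bsub>G\<^esub> = 1"
proof -
  have o: "\<one>\<^bsub>G\<^esub> \<in> H" using assms(2) subgroup.one_closed by blast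
  have "l \<one>\<^bsub>G\<^esub> = l \<one>\<^bsub>G\<^esub> * l \<one>\<^bsub>G\<^esub>"
    using assms(3) o unfolding lin_char_def
    by (metis assms(1) group.is_monoid monoid.l_one subgroup.mem_carrier[OF assms(2)])
  moreover have "l \<one>\<^bsub>G\<^esub> \<noteq> 0" using assms(3) o unfolding lin_char_def by blast
  ultimately show ?thesis by (metis mult_cancel_right2 mult.commute)
qed

lemma lin_char_pow:
  assumes "group G" "subgroup H G" "lin_char G H l" "h \<in> H"
  shows "h [^]\<^bsub>G\<^esub> (k::nat) \<in> H \<and> l (h [^]\<^bsub>G\<^esub> k) = l h ^ k"
proof (induction k)
  case 0
  have "h [^]\<^bsub>G\<^esub> (0::nat) = \<one>\<^bsub>G\<^esub>" by (rule nat_pow_0)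
  moreover have "\<one>\<^bsub>G\<^esub> \<in> H" by (rule subgroup.one_closed[OF assms(2)])
  ultimately show ?case using lin_char_one[OF assms(1-3)] by simp
next
  case (Suc k)
  have hk: "h [^]\<^bsub>G\<^esub> k \<in> H" using Suc by (rule conjunct1)
  have lk: "l (h [^]\<^bsub>G\<^esub> k) = l h ^ k" using Suc by (rule conjunct2)
  have e: "h [^]\<^bsub>G\<^esub> Suc k = h [^]\<^bsub>G\<^esub> k \<otimes>\<^bsub>G\<^esub> h"
    by (rule nat_pow_Suc)
  have m: "h [^]\<^bsub>G\<^esub> k \<otimes>\<^bsub>G\<^esub> h \<in> H" by (rule subgroup.m_closed[OF assms(2) hk assms(4)])
  have lc: "\<forall>x\<in>H. \<forall>y\<in>H. l (x \<otimes>\<^bsub>G\<^esub> y) = l x * l y" using assms(3) unfolding lin_char_def by (rule conjunct2)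
  have "l (h [^]\<^bsub>G\<^esub> k \<otimes>\<^bsub>G\<^esub> h) = l (h [^]\<^bsub>G\<^esub> k) * l h"
    using lc hk assms(4) by simp
  also have "\<dots> = l h ^ Suc k" unfolding lk by (simp add: mult.commute)
  finally show ?case unfolding e using m by (rule conjI[rotated])
qed

lemma lin_char_norm:
  assumes "group G" "finite (carrier G)" "subgroup H G" "lin_char G H l" "h \<in> H"
  shows "l h * cnj (l h) = 1"
proof -
  have hc: "h \<in> carrier G" by (rule subgroup.mem_carrier[OF assms(3) assms(5)])
  have p1: "h [^]\<^bsub>G\<^esub> order G = \<one>\<^bsub>G\<^esub>" using group.pow_order_eq_1[OF assms(1) hc] .
  have p2: "l (h [^]\<^bsub>G\<^esub> order G) = l h ^ order G"
    using lin_char_pow[OF assms(1,3,4,5), of "order G"] by (rule conjunct2)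
  have l1: "l \<one>\<^bsub>G\<^esub> = 1" by (rule lin_char_one[OF assms(1,3,4)])
  have pw: "l h ^ order G = 1" using p2 unfolding p1 l1 by (rule sym)
  have mo: "monoid G" using assms(1) by (rule group.is_monoid)
  have o: "0 < order G" using monoid.order_gt_0_iff_finite[OF mo] assms(2) by (rule iffD2)
  have "norm (l h) = 1 \<or> order G = 0" using pw by (rule power_eq_1_iff)
  hence "norm (l h) = 1" using o by linarith
  hence "complex_of_real ((norm (l h))\<^sup>2) = 1" by simp
  thus ?thesis using complex_norm_square[of "l h"] by simp
qed

lemma es_upd:
  assumes "comm_monoid G" "(n::nat) \<ge> 1" "\<forall>i<n. v i \<in> carrier G" "a \<in> carrier G"
  shows "finprod G (v(0:=a \<otimes>\<^bsub>G\<^esub> v 0)) {..<n} = a \<otimes>\<^bsub>G\<^esub> finprod G v {..<n}"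
proof -
  interpret comm_monoid G by fact
  have e: "{..<n} = insert 0 {1..<n}" using assms(2) by auto
  have v0: "v 0 \<in> carrier G" using assms by auto
  have P: "finprod G v {1..<n} \<in> carrier G" using assms by (intro finprod_closed) auto
  have 1: "finprod G (v(0:=a \<otimes>\<^bsub>G\<^esub> v 0)) {..<n} = (a \<otimes>\<^bsub>G\<^esub> v 0) \<otimes>\<^bsub>G\<^esub> finprod G (v(0:=a \<otimes>\<^bsub>G\<^esub> v 0)) {1..<n}"
    unfolding e by (subst finprod_insert) (use assms v0 in auto)
  have 2: "finprod G (v(0:=a \<otimes>\<^bsub>G\<^esub> v 0)) {1..<n} = finprod G v {1..<n}"
    by (rule finprod_cong') (use assms in \<open>auto simp: Pi_def\<close>)
  have 3: "finprod G v {..<n} = v 0 \<otimes>\<^bsub>G\<^esub> finprod G v {1..<n}"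
    unfolding e by (subst finprod_insert) (use assms v0 in auto)
  show ?thesis unfolding 1 2 3 using assms(4) v0 P by (rule m_assoc)
qed

theorem proposition3:
  fixes G :: "('a, 'b) monoid_scheme" and H :: "'a set" and n :: nat
    and l l' :: "'a \<Rightarrow> complex"
    and \<chi> \<psi> :: "(nat \<Rightarrow> nat) \<times> (nat \<Rightarrow> 'a set) \<Rightarrow> complex"
  assumes "comm_group G" and "finite (carrier G)" and "subgroup H G"
    and "lin_char G H l" and "lin_char G H l'" and "\<exists>h\<in>H. l h \<noteq> l' h"
    and "n \<ge> 1"
    and "virtual_char (Gn (G Mod H) {\<one>\<^bsub>G Mod H\<^esub>} n) \<chi>"
    and "virtual_char (Gn (G Mod H) {\<one>\<^bsub>G Mod H\<^esub>} n) \<psi>"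
  shows "char_inner (Gn G H n) (Phi G H n l \<chi>) (Phi G H n l' \<psi>) = 0"
proof -
  interpret comm_group G by fact
  obtain h where hH: "h \<in> H" and hl: "l h \<noteq> l' h" using assms(6) by blast
  have hc: "h \<in> carrier G" by (rule subgroup.mem_carrier[OF assms(3) hH])
  have ihH: "inv\<^bsub>G\<^esub> h \<in> H" by (rule subgroup.m_inv_closed[OF assms(3) hH])
  have ihc: "inv\<^bsub>G\<^esub> h \<in> carrier G" by (rule inv_closed[OF hc])
  define C where "C = carrier (Gn G H n)"
  define F where "F = (\<lambda>g. Phi G H n l \<chi> g * cnj (Phi G H n l' \<psi> g))"
  define T where "T = (\<lambda>a::'a. \<lambda>g::(nat \<Rightarrow> nat) \<times> (nat \<Rightarrow> 'a). (fst g, (snd g)(0 := a \<otimes>\<^bsub>G\<^esub> snd g 0)))"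
  have Tmem: "T a g \<in> C" and Tes: "entry_sum G n (T a g) = a \<otimes>\<^bsub>G\<^esub> entry_sum G n g"
    and Tred: "red G H n (T a g) = red G H n g"
    if g: "g \<in> C" and aH: "a \<in> H" for a g
  proof -
    have ac: "a \<in> carrier G" by (rule subgroup.mem_carrier[OF assms(3) aH])
    obtain p v where gpv: "g = (p, v)" by (cases g)
    have pv: "p permutes {..<n}" "\<forall>i<n. v i \<in> carrier G" "\<forall>i. n \<le> i \<longrightarrow> v i = undefined"
      and es: "entry_sum G n g \<in> H"
      using g unfolding C_def Gn_def mon_carrier_def gpv by auto
    have v0: "v 0 \<in> carrier G" using pv assms(7) by auto
    show es2: "entry_sum G n (T a g) = a \<otimes>\<^bsub>G\<^esub> entry_sum G n g"
      unfolding entry_sum_def T_def gpv using es_upd[OF comm_monoid_axioms assms(7) pv(2) ac] by simp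
    have "a \<otimes>\<^bsub>G\<^esub> entry_sum G n g \<in> H" by (rule subgroup.m_closed[OF assms(3) aH es])
    then show "T a g \<in> C" unfolding C_def Gn_def mon_carrier_def
      using pv ac v0 assms(7) es2 unfolding T_def gpv by auto
    have "H #>\<^bsub>G\<^esub> (a \<otimes>\<^bsub>G\<^esub> v 0) = H #>\<^bsub>G\<^esub> v 0"
      using coset_mult_assoc[of H a "v 0"] coset_join2[OF ac assms(3) aH] assms(3) ac v0
        subgroup.subset by metis
    then have "\<And>i. H #>\<^bsub>G\<^esub> (v(0 := a \<otimes>\<^bsub>G\<^esub> v 0)) i = H #>\<^bsub>G\<^esub> v i"
      by (case_tac "i = 0") simp_all
    then show "red G H n (T a g) = red G H n g" unfolding red_def T_def gpv fst_conv snd_conv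
      by presburger
  qed
  have TT: "T (inv\<^bsub>G\<^esub> h) (T h g) = g" if "g \<in> C" for g
  proof -
    obtain p v where gpv: "g = (p, v)" by (cases g)
    have "v 0 \<in> carrier G" using that assms(7) unfolding C_def Gn_def mon_carrier_def gpv by auto
    then show ?thesis unfolding T_def gpv using hc by (auto simp: m_assoc[symmetric])
  qed
  have TT': "T h (T (inv\<^bsub>G\<^esub> h) g) = g" if "g \<in> C" for g
  proof -
    obtain p v where gpv: "g = (p, v)" by (cases g)
    have "v 0 \<in> carrier G" using that assms(7) unfolding C_def Gn_def mon_carrier_def gpv by auto
    then show ?thesis unfolding T_def gpv using hc by (auto simp: m_assoc[symmetric])
  qed
  have bij: "bij_betw (T h) C C"
    by (rule bij_betw_byWitness[where f'="T (inv\<^bsub>G\<^esub> h)"]) (use TT TT' Tmem hH ihH in auto)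
  define c where "c = l h * cnj (l' h)"
  have FT: "F (T h g) = c * F g" if "g \<in> C" for g
  proof -
    have es: "entry_sum G n g \<in> H" using that unfolding C_def Gn_def by auto
    have l1: "l (h \<otimes>\<^bsub>G\<^esub> entry_sum G n g) = l h * l (entry_sum G n g)"
      using assms(4) hH es unfolding lin_char_def by blast
    have l2: "l' (h \<otimes>\<^bsub>G\<^esub> entry_sum G n g) = l' h * l' (entry_sum G n g)"
      using assms(5) hH es unfolding lin_char_def by blast
    show ?thesis unfolding F_def Phi_def c_def Tes[OF that hH] Tred[OF that hH] l1 l2
      by (simp add: algebra_simps)
  qed
  have "sum F C = sum (F \<circ> T h) C" using sum.reindex_bij_betw[OF bij, of F] by simp
  also have "\<dots> = c * sum F C" by (simp add: sum_distrib_left FT)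
  finally have S: "(1 - c) * sum F C = 0" by (simp add: algebra_simps)
  have "c \<noteq> 1"
  proof
    assume "c = 1"
    hence "l h * (cnj (l' h) * l' h) = l' h" unfolding c_def by (metis mult.assoc mult_1)
    moreover have "cnj (l' h) * l' h = 1"
      using lin_char_norm[OF group_axioms assms(2,3,5) hH] by (simp add: mult.commute)
    ultimately show False using hl by simp
  qed
  hence "sum F C = 0" using S by simp
  thus ?thesis unfolding char_inner_def F_def C_def by simp
qed

end
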